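(* Let $c\ge1$, $\lambda_1,\lambda_2,\mu_1,\mu_2>0$, let $X$ be the Markov chain described in the context with $X(0)=(0,0)$, fix $\alpha$ with $\mathrm{Re}\,\alpha>0$, and let $\{v_{i,j}\}_{i\ge j\ge0}$ be defined recursively by $v_{0,0}=\pi_{(0,c-1)}(\alpha)$ and, for $i\ge0$, $v_{i+1,0}=\pi_{(i+1,c-1)}(\alpha)$, $v_{i+1,j}=R_1\bigl(v_{i,j-1}+R_2\sum_{k=j}^{i}v_{i,k}\bigr)$ for $1\le j\le i+1$. Then for all $i\ge j\ge0$, $$v_{i,j}=R_1^{\,j}\pi_{(i-j,c-1)}(\alpha)+\sum_{k=j+1}^{i}R_1^{\,k}\pi_{(i-k,c-1)}(\alpha)\sum_{l=1}^{k-j}\frac{j}{k-j}\binom{k-j}{l}\binom{k-1}{l-1}R_2^{\,l}.$$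
   Context: The Markov chain $X=\{(X_1(t),X_2(t))\}_{t\ge0}$ on $\mathbb{N}_0^2$ has as its only nonzero off-diagonal transition rates: $q((i,j),(i+1,j))=\lambda_1$ ($i,j\ge0$); $q((i,j),(i,j+1))=\lambda_2$ ($i,j\ge0$); $q((i,j),(i-1,j))=\max(\min(i,c-j),0)\mu_1$ ($i\ge1$, $j\ge0$); $q((i,j),(i,j-1))=\min(c,j)\mu_2$ ($i\ge0$, $j\ge1$). For $x\in\mathbb{N}_0^2$, $p_x(t)=P(X(t)=x\mid X(0)=(0,0))$ and $\pi_x(\alpha)=\int_0^\infty e^{-\alpha t}p_x(t)\,dt$. For $\lambda,\mu>0$, $\phi_{\lambda,\mu}(s)=\frac{\lambda+\mu+s-\sqrt{(\lambda+\mu+s)^2-4\lambda\mu}}{2\lambda}$ is the Laplace–Stieltjes transform of the busy period of an $M/M/1$ queue (arrival rate $\lambda$, service rate $\mu$) started by one customer. Set $\rho_2=\lambda_2/(c\mu_2)$, $\phi_2=\phi_{\lambda_2,c\mu_2}(\lambda_1+\alpha)$, $r_2=\rho_2\phi_2$, $\Omega_2=\frac{\rho_2\phi_2}{\lambda_2(1-\rho_2\phi_2^2)}$, $R_1=\frac{\lambda_1\Omega_2}{1-r_2\phi_2}$, $R_2=r_2\phi_2$. Empty sums are zero. *)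

theory Defs
  imports "HOL-Analysis.Analysis"
begin

type_synonym state = "nat \<times> nat"

definition rate :: "nat \<Rightarrow> real \<Rightarrow> real \<Rightarrow> real \<Rightarrow> real \<Rightarrow> state \<Rightarrow> state \<Rightarrow> real" where
  "rate c l1 l2 m1 m2 x y =
     (let i = fst x; j = snd x; i' = fst y; j' = snd y in
      if i' = i + 1 \<and> j' = j then l1
      else if i' = i \<and> j' = j + 1 then l2
      else if 1 \<le> i \<and> i' = i - 1 \<and> j' = j
        then max (min (real i) (real c - real j)) 0 * m1
      else if 1 \<le> j \<and> i' = i \<and> j' = j - 1 then real (min c j) * m2
      else 0)"

text \<open>Uniformization constant: an upper bound for all total outflow rates.\<close>
definition unif_const :: "nat \<Rightarrow> real \<Rightarrow> real \<Rightarrow> real \<Rightarrow> real \<Rightarrow> real" where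
  "unif_const c l1 l2 m1 m2 = l1 + l2 + real c * m1 + real c * m2"

definition out_rate :: "nat \<Rightarrow> real \<Rightarrow> real \<Rightarrow> real \<Rightarrow> real \<Rightarrow> state \<Rightarrow> real" where
  "out_rate c l1 l2 m1 m2 x = (\<Sum>\<^sub>\<infinity> y \<in> UNIV - {x}. rate c l1 l2 m1 m2 x y)"

definition jump :: "nat \<Rightarrow> real \<Rightarrow> real \<Rightarrow> real \<Rightarrow> real \<Rightarrow> state \<Rightarrow> state \<Rightarrow> real" where
  "jump c l1 l2 m1 m2 x y =
     (if y = x then 1 - out_rate c l1 l2 m1 m2 x / unif_const c l1 l2 m1 m2
      else rate c l1 l2 m1 m2 x y / unif_const c l1 l2 m1 m2)"

fun jump_pow :: "nat \<Rightarrow> real \<Rightarrow> real \<Rightarrow> real \<Rightarrow> real \<Rightarrow> nat \<Rightarrow> state \<Rightarrow> state \<Rightarrow> real" where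
  "jump_pow c l1 l2 m1 m2 0 x y = (if x = y then 1 else 0)"
| "jump_pow c l1 l2 m1 m2 (Suc n) x y =
     (\<Sum>\<^sub>\<infinity> z. jump c l1 l2 m1 m2 x z * jump_pow c l1 l2 m1 m2 n z y)"

text \<open>Transition probability p_x(t) = P(X(t) = x | X(0) = (0,0)), via uniformization
  (rates are bounded, so the chain is non-explosive and this is its transition function).\<close>
definition trans_prob :: "nat \<Rightarrow> real \<Rightarrow> real \<Rightarrow> real \<Rightarrow> real \<Rightarrow> state \<Rightarrow> real \<Rightarrow> real" where
  "trans_prob c l1 l2 m1 m2 x t =
     (let L = unif_const c l1 l2 m1 m2 in
      (\<Sum>n. exp (- L * t) * (L * t) ^ n / fact n * jump_pow c l1 l2 m1 m2 n (0, 0) x))"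

definition lt_pi :: "nat \<Rightarrow> real \<Rightarrow> real \<Rightarrow> real \<Rightarrow> real \<Rightarrow> state \<Rightarrow> complex \<Rightarrow> complex" where
  "lt_pi c l1 l2 m1 m2 x \<alpha> =
     integral {0..} (\<lambda>t::real. exp (- \<alpha> * complex_of_real t) * complex_of_real (trans_prob c l1 l2 m1 m2 x t))"

text \<open>Busy-period LST of the M/M/1 queue (principal square root).\<close>
definition phi :: "real \<Rightarrow> real \<Rightarrow> complex \<Rightarrow> complex" where
  "phi l m s = (of_real l + of_real m + s - csqrt ((of_real l + of_real m + s)\<^sup>2 - 4 * of_real l * of_real m))
                / (2 * of_real l)"

definition rho2 :: "nat \<Rightarrow> real \<Rightarrow> real \<Rightarrow> real" where
  "rho2 c l2 m2 = l2 / (real c * m2)"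

definition phi2 :: "nat \<Rightarrow> real \<Rightarrow> real \<Rightarrow> real \<Rightarrow> complex \<Rightarrow> complex" where
  "phi2 c l1 l2 m2 \<alpha> = phi l2 (real c * m2) (of_real l1 + \<alpha>)"

definition r2 :: "nat \<Rightarrow> real \<Rightarrow> real \<Rightarrow> real \<Rightarrow> complex \<Rightarrow> complex" where
  "r2 c l1 l2 m2 \<alpha> = of_real (rho2 c l2 m2) * phi2 c l1 l2 m2 \<alpha>"

definition Omega2 :: "nat \<Rightarrow> real \<Rightarrow> real \<Rightarrow> real \<Rightarrow> complex \<Rightarrow> complex" where
  "Omega2 c l1 l2 m2 \<alpha> = of_real (rho2 c l2 m2) * phi2 c l1 l2 m2 \<alpha> /
      (of_real l2 * (1 - of_real (rho2 c l2 m2) * (phi2 c l1 l2 m2 \<alpha>)\<^sup>2))"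

definition R1 :: "nat \<Rightarrow> real \<Rightarrow> real \<Rightarrow> real \<Rightarrow> complex \<Rightarrow> complex" where
  "R1 c l1 l2 m2 \<alpha> = of_real l1 * Omega2 c l1 l2 m2 \<alpha> / (1 - r2 c l1 l2 m2 \<alpha> * phi2 c l1 l2 m2 \<alpha>)"

definition R2 :: "nat \<Rightarrow> real \<Rightarrow> real \<Rightarrow> real \<Rightarrow> complex \<Rightarrow> complex" where
  "R2 c l1 l2 m2 \<alpha> = r2 c l1 l2 m2 \<alpha> * phi2 c l1 l2 m2 \<alpha>"

end

theory Submission imports Defs begin

definition cc :: "nat \<Rightarrow> nat \<Rightarrow> nat \<Rightarrow> real" where
  "cc k j l = (if j < k then (if l = 0 then 0 else real j / real (k - j) * real ((k - j) choose l) * real ((k - 1) choose (l - 1)))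
              else if j = k then (if l = 0 then 1 else 0) else 0)"

lemma cc_alt:
  assumes "j < k" "l \<ge> 1"
  shows "cc k j l = real j / real l * real ((k - j - 1) choose (l - 1)) * real ((k - 1) choose (l - 1))"
proof -
  have e: "(k - j) * ((k - j - 1) choose (l - 1)) = l * ((k - j) choose l)"
    using times_binomial_minus1_eq[of l "k - j"] assms by simp
  hence "real (k - j) * real ((k - j - 1) choose (l - 1)) = real l * real ((k - j) choose l)"
    by (metis of_nat_mult)
  moreover have "real (k - j) > 0" "real l > 0" using assms by auto
  ultimately have "real ((k - j) choose l) = real (k - j) * real ((k - j - 1) choose (l - 1)) / real l"
    by (simp add: field_simps)
  then show ?thesis using assms \<open>real (k - j) > 0\<close> unfolding cc_def
    by simp
qed

lemma cc_big: "l > k \<Longrightarrow> cc k j l = 0"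
  unfolding cc_def by auto

lemma alg_help:
  fixes jj mm pp K X Z :: real
  assumes "K > 0" "mm > 0" "pp > 0"
  shows "jj / (pp+1) * X * Z - (jj+1) / (pp+1) * ((mm - pp) * X / mm) * Z
        - ((jj - 1) / (pp+1) * X * ((K - pp) * Z / K) - jj / (pp+1) * ((mm - pp) * X / mm) * ((K - pp) * Z / K)
           + jj / pp * (pp * X / mm) * (pp * Z / K))
      = X * Z / ((pp+1) * mm * K) * (jj * mm * K - (jj + 1) * (mm - pp) * K - (jj - 1) * (K - pp) * mm
      + jj * (mm - pp) * (K - pp) - jj * pp * (pp + 1))"
  using assms by (simp add: field_simps add_pos_pos less_imp_neq[symmetric])

lemma gen_case:
  fixes j m p :: nat
  assumes "j \<ge> 1" "m \<ge> 1" "p \<ge> 1" "p \<le> m"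
  defines "X \<equiv> real (m choose p)" and "Y \<equiv> real ((m-1) choose p)"
    and "Z \<equiv> real ((j+m) choose p)" and "W \<equiv> real ((j+m-1) choose p)"
    and "A \<equiv> real ((m-1) choose (p-1))" and "B \<equiv> real ((j+m-1) choose (p-1))"
  shows "real j / real (p+1) * X * Z - real (j+1) / real (p+1) * Y * Z
        = real (j-1) / real (p+1) * X * W - real j / real (p+1) * Y * W + real j / real p * A * B"
proof -
  have r1: "real p * X = real m * A" unfolding X_def A_def
    using arg_cong[OF times_binomial_minus1_eq[of p m], of real] assms(3) by simp
  have r2: "real m * Y = (real m - real p) * X" unfolding X_def Y_def
    using arg_cong[OF binomial_absorb_comp[of m p], of real] assms(4) by (simp add: of_nat_diff)
  have r3: "real p * Z = (real j + real m) * B" unfolding Z_def B_def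
    using arg_cong[OF times_binomial_minus1_eq[of p "j+m"], of real] assms(3) by simp
  have r4: "(real j + real m) * W = (real j + real m - real p) * Z" unfolding Z_def W_def
    using arg_cong[OF binomial_absorb_comp[of "j+m" p], of real] assms(4) by (simp add: of_nat_diff)
  have mp: "real m > 0" "real p > 0" "real j + real m > 0" using assms by auto
  have A: "A = real p * X / real m" using r1 mp by (simp add: field_simps)
  have Y: "Y = (real m - real p) * X / real m" using r2 mp by (simp add: field_simps)
  have B: "B = real p * Z / (real j + real m)" using r3 mp by (simp add: field_simps)
  have W: "W = (real j + real m - real p) * Z / (real j + real m)" using r4 mp by (simp add: field_simps)
  have j1: "real (j-1) = real j - 1" "real (j+1) = real j + 1" "real (p+1) = real p + 1" using assms by auto
  define K where "K = real j + real m"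
  have K0: "K > 0" "real m > 0" "real p > 0" "real p + 1 > 0" using mp K_def by auto
  have key: "real j * real m * K - (real j + 1) * (real m - real p) * K - (real j - 1) * (K - real p) * real m
      + real j * (real m - real p) * (K - real p) - real j * real p * (real p + 1) = 0"
    unfolding K_def by (simp add: algebra_simps)
  have E: "real j / real (p+1) * X * Z - real (j+1) / real (p+1) * Y * Z
        - (real (j-1) / real (p+1) * X * W - real j / real (p+1) * Y * W + real j / real p * A * B)
      = X * Z / ((real p + 1) * real m * K) * (real j * real m * K - (real j + 1) * (real m - real p) * K - (real j - 1) * (K - real p) * real m
      + real j * (real m - real p) * (K - real p) - real j * real p * (real p + 1))"
    unfolding A Y B W j1 K_def[symmetric] by (rule alg_help) (use K0 in auto)
  show ?thesis using E unfolding key by simp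
qed

lemma cc_local:
  assumes "1 \<le> j" "j < k"
  shows "cc k j l - cc k (j+1) l = cc (k-1) (j-1) l - cc (k-1) j l + (if l = 0 then 0 else cc (k-1) j (l-1))"
proof (cases "l = 0")
  case True then show ?thesis using assms unfolding cc_def by auto
next
  case l0: False
  show ?thesis
  proof (cases "j + 1 = k")
    case True
    then have k: "k = j + 1" by simp
    show ?thesis
    proof (cases "l = 1")
      case True then show ?thesis using assms unfolding cc_def k by auto
    next
      case False
      then have "l \<ge> 2" using l0 by auto
      then have z: "(1 choose l) = 0" by simp
      have "cc (j+1) j l = 0" unfolding cc_def using z by simp
      moreover have "cc (j+1) (j+1) l = 0" "cc j j l = 0" "cc j j (l-1) = 0"
        unfolding cc_def using l0 \<open>l \<ge> 2\<close> by auto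
      moreover have "cc j (j-1) l = 0" unfolding cc_def using z assms(1) by simp
      ultimately show ?thesis using l0 unfolding k by simp
    qed
  next
    case False
    define m where "m = k - j - 1"
    have k: "k = j + m + 1" and m1: "m \<ge> 1" using assms False unfolding m_def by auto
    show ?thesis
    proof (cases "l = 1")
      case True then show ?thesis using assms m1 unfolding cc_def k by auto
    next
      case False
      define p where "p = l - 1"
      have l: "l = p + 1" and p1: "p \<ge> 1" using l0 False unfolding p_def by auto
      have e1: "cc k j l = real j / real (p+1) * real (m choose p) * real ((j+m) choose p)"
        using cc_alt[of j k l] assms unfolding k l by simp
      have e2: "cc k (j+1) l = real (j+1) / real (p+1) * real ((m-1) choose p) * real ((j+m) choose p)"
        using cc_alt[of "j+1" k l] assms m1 unfolding k l by simp
      have e3: "cc (k-1) (j-1) l = real (j-1) / real (p+1) * real (m choose p) * real ((j+m-1) choose p)"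
        using cc_alt[of "j-1" "k-1" l] assms m1 unfolding k l by simp
      have e4: "cc (k-1) j l = real j / real (p+1) * real ((m-1) choose p) * real ((j+m-1) choose p)"
        using cc_alt[of "j" "k-1" l] assms m1 unfolding k l by simp
      have e5: "cc (k-1) j (l-1) = real j / real p * real ((m-1) choose (p-1)) * real ((j+m-1) choose (p-1))"
        using cc_alt[of "j" "k-1" p] assms m1 p1 unfolding k l by simp
      show ?thesis
      proof (cases "p \<le> m")
        case True
        show ?thesis unfolding e1 e2 e3 e4 e5 using l0 gen_case[OF assms(1) m1 p1 True] by simp
      next
        case False
        then have z: "m choose p = 0" "(m-1) choose p = 0" "(m-1) choose (p-1) = 0" using m1 p1 by auto
        show ?thesis unfolding e1 e2 e3 e4 e5 z using l0 by simp
      qed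
    qed
  qed
qed


definition Cf :: "complex \<Rightarrow> nat \<Rightarrow> nat \<Rightarrow> complex" where
  "Cf b k j = (\<Sum>l\<le>k. complex_of_real (cc k j l) * b ^ l)"

lemma Cf_ext:
  assumes "k \<le> N"
  shows "Cf b k j = (\<Sum>l\<le>N. complex_of_real (cc k j l) * b ^ l)"
  unfolding Cf_def
  by (rule sum.mono_neutral_left) (use assms cc_big in auto)

lemma Cf_diag: "Cf b k k = 1"
proof -
  have "Cf b k k = (\<Sum>l\<le>k. if l = 0 then 1 else 0)"
    unfolding Cf_def by (rule sum.cong) (auto simp: cc_def)
  also have "\<dots> = 1" by (simp add: sum.delta)
  finally show ?thesis .
qed

lemma Cf_local:
  assumes "1 \<le> j" "j < k"
  shows "Cf b k j - Cf b k (j+1) = Cf b (k-1) (j-1) - Cf b (k-1) j + b * Cf b (k-1) j"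
proof -
  obtain k' where k: "k = Suc k'" using assms by (cases k) auto
  have "Cf b k j - Cf b k (j+1) = (\<Sum>l\<le>k. complex_of_real (cc k j l - cc k (j+1) l) * b ^ l)"
    unfolding Cf_def by (simp add: sum_subtractf algebra_simps)
  also have "\<dots> = (\<Sum>l\<le>k. complex_of_real (cc (k-1) (j-1) l) * b ^ l) - (\<Sum>l\<le>k. complex_of_real (cc (k-1) j l) * b ^ l)
      + (\<Sum>l\<le>k. complex_of_real (if l = 0 then 0 else cc (k-1) j (l-1)) * b ^ l)"
    unfolding cc_local[OF assms] by (simp add: sum_subtractf sum.distrib algebra_simps)
  also have "(\<Sum>l\<le>k. complex_of_real (cc (k-1) (j-1) l) * b ^ l) = Cf b (k-1) (j-1)"
    by (rule Cf_ext[symmetric]) simp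
  also have "(\<Sum>l\<le>k. complex_of_real (cc (k-1) j l) * b ^ l) = Cf b (k-1) j"
    by (rule Cf_ext[symmetric]) simp
  also have "(\<Sum>l\<le>k. complex_of_real (if l = 0 then 0 else cc (k-1) j (l-1)) * b ^ l)
      = (\<Sum>l\<le>k'. complex_of_real (cc k' j l) * b ^ Suc l)"
    unfolding k by (subst sum.atMost_Suc_shift) simp
  also have "\<dots> = b * Cf b (k-1) j"
    unfolding Cf_def k by (simp add: sum_distrib_left algebra_simps)
  finally show ?thesis .
qed

lemma Cf_rec:
  assumes "1 \<le> j" "j \<le> k"
  shows "Cf b k j = Cf b (k-1) (j-1) + b * (\<Sum>m = j..k-1. Cf b (k-1) m)"
  using assms
proof (induction "k - j" arbitrary: j)
  case 0
  then have "j = k" by simp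
  then show ?case using 0 by (simp add: Cf_diag)
next
  case (Suc d)
  then have jk: "j < k" by simp
  have IH: "Cf b k (j+1) = Cf b (k-1) j + b * (\<Sum>m = j+1..k-1. Cf b (k-1) m)"
    using Suc.hyps(1)[of "j+1"] Suc.hyps(2) jk by simp
  have s: "(\<Sum>m = j..k-1. Cf b (k-1) m) = Cf b (k-1) j + (\<Sum>m = j+1..k-1. Cf b (k-1) m)"
    using jk by (subst sum.atLeast_Suc_atMost) auto
  have L: "Cf b k j = Cf b k (j+1) + (Cf b (k-1) (j-1) - Cf b (k-1) j + b * Cf b (k-1) j)"
    using Cf_local[OF Suc.prems(1) jk, of b] by (simp add: algebra_simps)
  show ?case unfolding L IH s by (simp add: algebra_simps)
qed


lemma sum_swap_tri:
  fixes g :: "nat \<Rightarrow> nat \<Rightarrow> complex"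
  shows "(\<Sum>k = j..i. \<Sum>m = j..k. g k m) = (\<Sum>m = j..i. \<Sum>k = m..i. g k m)"
proof -
  have "(\<Sum>k = j..i. \<Sum>m = j..k. g k m) = (\<Sum>k \<in> {j..i}. \<Sum>m \<in> {m. m \<in> {j..i} \<and> m \<le> k}. g k m)"
    by (rule sum.cong) (auto intro!: sum.cong)
  also have "\<dots> = (\<Sum>m \<in> {j..i}. \<Sum>k \<in> {k. k \<in> {j..i} \<and> m \<le> k}. g k m)"
    by (rule sum.swap_restrict) auto
  also have "\<dots> = (\<Sum>m = j..i. \<Sum>k = m..i. g k m)"
    by (rule sum.cong) (auto intro!: sum.cong)
  finally show ?thesis .
qed

lemma Cf_zero: "0 < k \<Longrightarrow> Cf b k 0 = 0"
  by (auto simp: Cf_def cc_def intro!: sum.neutral)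

lemma main_abs:
  fixes a b :: complex and p :: "nat \<Rightarrow> complex" and v :: "nat \<Rightarrow> nat \<Rightarrow> complex"
  assumes h0: "v 0 0 = p 0" and h1: "\<forall>i. v (Suc i) 0 = p (Suc i)"
    and h2: "\<forall>i j. 1 \<le> j \<and> j \<le> i + 1 \<longrightarrow> v (Suc i) j = a * (v i (j - 1) + b * (\<Sum>k = j..i. v i k))"
  shows "j \<le> i \<Longrightarrow> v i j = (\<Sum>k = j..i. a ^ k * p (i - k) * Cf b k j)"
proof (induction i arbitrary: j)
  case 0
  then show ?case using h0 by (simp add: Cf_diag)
next
  case (Suc i)
  show ?case
  proof (cases j)
    case 0
    have "(\<Sum>k = 0..Suc i. a ^ k * p (Suc i - k) * Cf b k 0) = a ^ 0 * p (Suc i - 0) * Cf b 0 0 + (\<Sum>k = Suc 0..Suc i. a ^ k * p (Suc i - k) * Cf b k 0)"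
      by (rule sum.atLeast_Suc_atMost) simp
    also have "(\<Sum>k = Suc 0..Suc i. a ^ k * p (Suc i - k) * Cf b k 0) = 0"
      by (rule sum.neutral) (auto simp: Cf_zero)
    finally show ?thesis using h1 0 by (simp add: Cf_diag)
  next
    case (Suc j')
    have jle: "j' \<le> i" using Suc.prems Suc by simp
    have rec: "v (Suc i) j = a * (v i j' + b * (\<Sum>m = j..i. v i m))"
      using h2 Suc.prems Suc by auto
    have P1: "a * v i j' = (\<Sum>k = j..Suc i. a ^ k * p (Suc i - k) * Cf b (k-1) (j-1))"
      unfolding Suc.IH[OF jle] Suc sum_distrib_left
      by (subst sum.shift_bounds_cl_Suc_ivl) (simp add: algebra_simps)
    have "a * (b * (\<Sum>m = j..i. v i m)) = (\<Sum>m = j..i. \<Sum>k = m..i. a * b * (a ^ k * p (i - k) * Cf b k m))"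
    proof -
      have "(\<Sum>m = j..i. v i m) = (\<Sum>m = j..i. \<Sum>k = m..i. a ^ k * p (i - k) * Cf b k m)"
        by (rule sum.cong) (simp_all add: Suc.IH)
      then show ?thesis by (simp add: sum_distrib_left algebra_simps)
    qed
    also have "\<dots> = (\<Sum>k = j..i. \<Sum>m = j..k. a * b * (a ^ k * p (i - k) * Cf b k m))"
      by (rule sum_swap_tri[symmetric])
    also have "\<dots> = (\<Sum>k = j'..i. \<Sum>m = j..k. a * b * (a ^ k * p (i - k) * Cf b k m))"
      using jle by (subst (2) sum.atLeast_Suc_atMost) (auto simp: Suc)
    also have "\<dots> = (\<Sum>k = j..Suc i. a ^ k * p (Suc i - k) * (b * (\<Sum>m = j..k-1. Cf b (k-1) m)))"
      unfolding Suc
      by (subst sum.shift_bounds_cl_Suc_ivl) (simp add: sum_distrib_left algebra_simps)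
    finally have P2: "a * (b * (\<Sum>m = j..i. v i m)) = \<dots>" .
    have "v (Suc i) j = (\<Sum>k = j..Suc i. a ^ k * p (Suc i - k) * (Cf b (k-1) (j-1) + b * (\<Sum>m = j..k-1. Cf b (k-1) m)))"
      unfolding rec distrib_left P1 P2 by (simp add: sum.distrib algebra_simps)
    also have "\<dots> = (\<Sum>k = j..Suc i. a ^ k * p (Suc i - k) * Cf b k j)"
    proof (rule sum.cong)
      fix k assume "k \<in> {j..Suc i}"
      then have "1 \<le> j" "j \<le> k" using Suc by auto
      then show "a ^ k * p (Suc i - k) * (Cf b (k-1) (j-1) + b * (\<Sum>m = j..k-1. Cf b (k-1) m)) = a ^ k * p (Suc i - k) * Cf b k j"
        using Cf_rec[of j k b] by simp
    qed simp
    finally show ?thesis .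
  qed
qed


lemma Cf_explicit:
  assumes "j < k"
  shows "Cf b k j = (\<Sum>l = 1..k - j. of_nat j / of_nat (k - j) * of_nat ((k - j) choose l)
                              * of_nat ((k - 1) choose (l - 1)) * b ^ l)"
proof -
  have "Cf b k j = (\<Sum>l = 1..k - j. complex_of_real (cc k j l) * b ^ l)"
    unfolding Cf_def
    by (rule sum.mono_neutral_right) (use assms in \<open>auto simp: cc_def\<close>)
  also have "\<dots> = (\<Sum>l = 1..k - j. of_nat j / of_nat (k - j) * of_nat ((k - j) choose l)
                              * of_nat ((k - 1) choose (l - 1)) * b ^ l)"
    by (rule sum.cong) (use assms in \<open>auto simp: cc_def\<close>)
  finally show ?thesis .
qed

theorem theorem3:
  fixes c :: nat and l1 l2 m1 m2 :: real and \<alpha> :: complex and v :: "nat \<Rightarrow> nat \<Rightarrow> complex"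
  assumes "c \<ge> 1" and "l1 > 0" and "l2 > 0" and "m1 > 0" and "m2 > 0"
    and "Re \<alpha> > 0"
    and "v 0 0 = lt_pi c l1 l2 m1 m2 (0, c - 1) \<alpha>"
    and "\<forall>i. v (Suc i) 0 = lt_pi c l1 l2 m1 m2 (Suc i, c - 1) \<alpha>"
    and "\<forall>i j. 1 \<le> j \<and> j \<le> i + 1 \<longrightarrow>
           v (Suc i) j = R1 c l1 l2 m2 \<alpha> * (v i (j - 1) + R2 c l1 l2 m2 \<alpha> * (\<Sum>k = j..i. v i k))"
  shows "\<forall>i j. j \<le> i \<longrightarrow>
     v i j = R1 c l1 l2 m2 \<alpha> ^ j * lt_pi c l1 l2 m1 m2 (i - j, c - 1) \<alpha>
       + (\<Sum>k = j + 1..i. R1 c l1 l2 m2 \<alpha> ^ k * lt_pi c l1 l2 m1 m2 (i - k, c - 1) \<alpha> *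
            (\<Sum>l = 1..k - j. of_nat j / of_nat (k - j) * of_nat ((k - j) choose l)
                              * of_nat ((k - 1) choose (l - 1)) * R2 c l1 l2 m2 \<alpha> ^ l))"
proof (intro allI impI)
  fix i j :: nat assume ji: "j \<le> i"
  define a where "a = R1 c l1 l2 m2 \<alpha>"
  define b where "b = R2 c l1 l2 m2 \<alpha>"
  define p where "p = (\<lambda>n. lt_pi c l1 l2 m1 m2 (n, c - 1) \<alpha>)"
  have M: "v i j = (\<Sum>k = j..i. a ^ k * p (i - k) * Cf b k j)"
    unfolding a_def b_def p_def
    by (rule main_abs[of v "\<lambda>n. lt_pi c l1 l2 m1 m2 (n, c - 1) \<alpha>" "R1 c l1 l2 m2 \<alpha>" "R2 c l1 l2 m2 \<alpha>",
          OF assms(7) assms(8) assms(9) ji])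
  have M2: "(\<Sum>k = j..i. a ^ k * p (i - k) * Cf b k j) = a ^ j * p (i - j) * Cf b j j + (\<Sum>k = Suc j..i. a ^ k * p (i - k) * Cf b k j)"
    by (rule sum.atLeast_Suc_atMost[OF ji])
  have S: "(\<Sum>k = Suc j..i. a ^ k * p (i - k) * Cf b k j) =
      (\<Sum>k = j + 1..i. a ^ k * p (i - k) *
            (\<Sum>l = 1..k - j. of_nat j / of_nat (k - j) * of_nat ((k - j) choose l)
                              * of_nat ((k - 1) choose (l - 1)) * b ^ l))"
    by (rule sum.cong) (auto simp: Cf_explicit)
  have "v i j = a ^ j * p (i - j) + (\<Sum>k = j + 1..i. a ^ k * p (i - k) *
            (\<Sum>l = 1..k - j. of_nat j / of_nat (k - j) * of_nat ((k - j) choose l)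
                              * of_nat ((k - 1) choose (l - 1)) * b ^ l))"
    unfolding M M2 S Cf_diag by simp
  then show "v i j = R1 c l1 l2 m2 \<alpha> ^ j * lt_pi c l1 l2 m1 m2 (i - j, c - 1) \<alpha>
       + (\<Sum>k = j + 1..i. R1 c l1 l2 m2 \<alpha> ^ k * lt_pi c l1 l2 m1 m2 (i - k, c - 1) \<alpha> *
            (\<Sum>l = 1..k - j. of_nat j / of_nat (k - j) * of_nat ((k - j) choose l)
                              * of_nat ((k - 1) choose (l - 1)) * R2 c l1 l2 m2 \<alpha> ^ l))"
    unfolding a_def b_def p_def .
qed

end
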